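(* Let $d\ge 1$ and let $B$ be a $d\times d$ integral matrix with $|\det(B)|=2$. Then $B$ is integrally similar to a $d\times d$ integral matrix $A$ with the following properties: (1) $A\mathbb{Z}^d=A^\tau\mathbb{Z}^d$; (2) there exists $\vec{\ell}_A\in\mathbb{Z}^d$ such that $\mathbb{Z}^d=(\vec{\ell}_A+A\mathbb{Z}^d)\,\dot\cup\, A\mathbb{Z}^d$ (disjoint union); (3) there exists $\vec{q}_A\in\mathbb{Z}^d$ such that $\vec{q}_A\circ A\mathbb{Z}^d\subseteq 2\mathbb{Z}$ and $\vec{q}_A\circ(\vec{\ell}_A+A\mathbb{Z}^d)\subseteq 2\mathbb{Z}+1$; (4) for every $\vec m\in A\mathbb{Z}^d$ and every $\vec n\in\mathbb{Z}^d$, $\mathbb{Z}^d=(\vec n-A\mathbb{Z}^d)\,\dot\cup\,(\vec{\ell}_A-\vec m-\vec n+A\mathbb{Z}^d)$; (5) for every $\vec m\in\vec{\ell}_A+A\mathbb{Z}^d$ and every $\vec n\in\mathbb{Z}^d$, $\vec n-A\mathbb{Z}^d=\vec{\ell}_A-\vec m-\vec n+A\mathbb{Z}^d$.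
   Context: $A^\tau$ denotes the transpose of $A$. For $\vec x,\vec y\in\mathbb{C}^d$, $\vec x\circ\vec y=\sum_{j=1}^d x_j\overline{y_j}$; for a set $X$ of vectors, $\vec q\circ X=\{\vec q\circ\vec x:\vec x\in X\}$. An integral matrix $B$ is integrally similar to an integral matrix $C$ if $C=SBS^{-1}$ for some integral matrix $S$ whose inverse $S^{-1}$ is also integral. $\dot\cup$ denotes disjoint union. *)

theory Defs
  imports "HOL-Analysis.Analysis"
begin

text \<open>d x d integral matrices are \<open>int ^ 'n ^ 'n\<close> with \<open>d = CARD('n)\<close>;
  integral vectors in Z^d are \<open>int ^ 'n\<close>.\<close>

definition int_lattice :: "int ^ 'n ^ 'n \<Rightarrow> (int ^ 'n) set" where
  "int_lattice A = range (\<lambda>x. A *v x)"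

definition int_circ :: "int ^ 'n \<Rightarrow> int ^ 'n \<Rightarrow> int" where
  "int_circ x y = (\<Sum>j\<in>UNIV. x $ j * y $ j)"   \<comment> \<open>x \<circ> y for integer vectors (conjugation is trivial)\<close>

definition int_similar :: "int ^ 'n ^ 'n \<Rightarrow> int ^ 'n ^ 'n \<Rightarrow> bool" where
  "int_similar B C \<longleftrightarrow> (\<exists>S Sinv :: int ^ 'n ^ 'n.
      S ** Sinv = mat 1 \<and> Sinv ** S = mat 1 \<and> C = S ** B ** Sinv)"

end

theory Submission
  imports Defs
begin


lemma det_of_int:
  fixes M :: "int^'n^'n"
  shows "det (map_matrix real_of_int M) = real_of_int (det M)"
  unfolding det_def by (simp add: of_int_sum of_int_mult of_int_prod)

lemma adj_exists:
  fixes A :: "int^'n^'n"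
  shows "\<exists>X. A ** X = mat (det A)"
proof (cases "det A = 0")
  case True then show ?thesis by (intro exI[of _ 0]) simp
next
  case False
  define Ar where "Ar = map_matrix real_of_int A"
  have dr: "det Ar = real_of_int (det A)" unfolding Ar_def by (rule det_of_int)
  with False have "det Ar \<noteq> 0" by simp
  then obtain Ai where Ai: "Ar ** Ai = mat 1"
    using invertible_det_nz[of Ar] unfolding invertible_def by blast
  define X :: "int^'n^'n" where "X = (\<chi> k j. det (\<chi> i jj. if jj = k then (if i = j then 1 else 0) else A$i$jj))"
  have colj: "real_of_int (X$k$j) = Ai$k$j * det Ar" for k j
  proof -
    define y where "y = (\<chi> k. Ai$k$j)"
    have Ay: "Ar *v y = (\<chi> i. if i = j then 1 else 0)"
    proof -
      have "Ar *v y = (Ar ** Ai) *v (\<chi> i. if i = j then 1 else 0)"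
        unfolding y_def
        by (simp add: vec_eq_iff matrix_vector_mult_def matrix_matrix_mult_def sum_distrib_left
              if_distrib sum.swap[of _ UNIV] mult.assoc cong: if_cong)
      then show ?thesis using Ai by simp
    qed
    have "det (\<chi> i jj. if jj = k then (Ar *v y)$i else Ar$i$jj) = y$k * det Ar"
      by (rule cramer_lemma)
    moreover have "real_of_int (X$k$j) = det (\<chi> i jj. if jj = k then (Ar *v y)$i else Ar$i$jj)"
    proof -
      have "real_of_int (X$k$j) = det (map_matrix real_of_int (\<chi> i jj. if jj = k then (if i = j then 1 else 0) else A$i$jj))"
        unfolding X_def det_of_int by simp
      also have "map_matrix real_of_int (\<chi> i jj. if jj = k then (if i = j then 1 else 0) else A$i$jj) = (\<chi> i jj. if jj = k then (Ar *v y)$i else Ar$i$jj)"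
        unfolding Ay by (simp add: vec_eq_iff Ar_def)
      finally show ?thesis .
    qed
    ultimately show ?thesis unfolding y_def by simp
  qed
  have "A ** X = mat (det A)"
  proof -
    have "map_matrix real_of_int (A ** X) = map_matrix real_of_int (mat (det A))"
    proof -
      have "real_of_int ((A ** X)$i$j) = (Ar ** Ai)$i$j * det Ar" for i j
        by (simp add: matrix_matrix_mult_def colj Ar_def sum_distrib_right mult.assoc)
      then show ?thesis using Ai dr by (simp add: vec_eq_iff mat_def)
    qed
    then show ?thesis by (simp add: vec_eq_iff map_matrix_def)
  qed
  then show ?thesis by blast
qed



lemma mult_if_r: "(a::'a::semiring_0) * (if P then b else c) = (if P then a * b else a * c)" by simp
lemma mult_if_l: "(if P then b else c) * (a::'a::semiring_0) = (if P then b * a else c * a)" by simp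

definition ev :: "int^'n \<Rightarrow> bool" where "ev x \<longleftrightarrow> (\<forall>i. even (x$i))"

lemma det_mat: "det (mat c :: 'a::comm_ring_1^'n^'n) = c ^ CARD('n)"
  by (subst det_diagonal) (auto simp: mat_def)

lemma kernel_exists:
  fixes B :: "int^'n^'n"
  assumes "\<bar>det B\<bar> = 2"
  shows "\<exists>u p. ev (B *v u) \<and> odd (u$p)"
proof -
  obtain X where BX: "B ** X = mat (det B)" using adj_exists by blast
  have dB: "det B = 2 \<or> det B = -2" using assms by arith
  have evd: "even (det B)" using dB by auto
  show ?thesis
  proof (cases "\<exists>p j. odd (X$p$j)")
    case True
    then obtain p j where pj: "odd (X$p$j)" by blast
    define u where "u = (\<chi> i. X$i$j)"
    have "(B *v u)$i = (B ** X)$i$j" for i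
      by (simp add: u_def matrix_vector_mult_def matrix_matrix_mult_def)
    then have "ev (B *v u)" using evd by (simp add: ev_def BX mat_def)
    moreover have "odd (u$p)" using pj by (simp add: u_def)
    ultimately show ?thesis by blast
  next
    case False
    define Y :: "int^'n^'n" where "Y = (\<chi> i j. X$i$j div 2)"
    have XY: "X$i$j = 2 * Y$i$j" for i j using False by (simp add: Y_def)
    have "2 * (B ** Y)$i$j = (B ** X)$i$j" for i j
      by (simp add: matrix_matrix_mult_def XY sum_distrib_left mult.left_commute)
    then have "2 * (B ** Y)$i$j = 2 * (mat (det B div 2) :: int^'n^'n)$i$j" for i j
      using evd by (simp add: BX mat_def)
    then have "B ** Y = mat (det B div 2)" by (simp add: vec_eq_iff)
    then have "det B * det Y = (det B div 2) ^ CARD('n)" by (metis det_mul det_mat)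
    moreover have "\<bar>det B div 2\<bar> = 1" using assms by (cases "det B \<ge> 0") auto
    ultimately have "\<bar>det B\<bar> * \<bar>det Y\<bar> = 1" by (metis abs_mult power_abs power_one)
    with assms have "2 * \<bar>det Y\<bar> = 1" by simp
    then have "2 * det Y = 1 \<or> 2 * det Y = -1" by arith
    then have False by presburger
    then show ?thesis ..
  qed
qed

lemma unimod_inverse:
  fixes A :: "int^'n^'n"
  assumes "\<bar>det A\<bar> = 1"
  shows "\<exists>X. A ** X = mat 1 \<and> X ** A = mat 1"
proof -
  obtain X0 where X0: "A ** X0 = mat (det A)" using adj_exists by blast
  obtain Y where Y: "transpose A ** Y = mat (det A)" using adj_exists[of "transpose A"] by auto
  have Y': "transpose Y ** A = mat (det A)"
    by (metis Y matrix_transpose_mul transpose_mat transpose_transpose)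
  have dd: "det A * det A = 1" using assms by (metis abs_mult_self_eq mult_1_right)
  have rm: "M ** mat c = (\<chi> i j. M$i$j * c)" for M :: "int^'n^'n" and c
    unfolding matrix_matrix_mult_def mat_def
    by (auto simp: vec_eq_iff if_distrib if_distribR sum.delta'[OF finite] sum.delta[OF finite] cong: if_cong)
  have lm: "mat c ** M = (\<chi> i j. c * M$i$j)" for M :: "int^'n^'n" and c
    unfolding matrix_matrix_mult_def mat_def
    by (auto simp: vec_eq_iff if_distrib if_distribR sum.delta'[OF finite] sum.delta[OF finite] cong: if_cong)
  have mm: "mat a ** mat b = (mat (a*b) :: int^'n^'n)" for a b
    by (subst rm) (simp add: vec_eq_iff mat_def)
  define X where "X = X0 ** mat (det A)"
  define Z where "Z = mat (det A) ** transpose Y"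
  have AX: "A ** X = mat 1" unfolding X_def by (metis X0 matrix_mul_assoc mm dd)
  have ZA: "Z ** A = mat 1" unfolding Z_def by (metis Y' matrix_mul_assoc mm dd)
  have "Z = X" by (metis AX ZA matrix_mul_assoc matrix_mul_lid matrix_mul_rid)
  with AX ZA show ?thesis by blast
qed



lemma ev_mult: "ev x \<Longrightarrow> ev ((M::int^'n^'m) *v x)"
  unfolding ev_def matrix_vector_mult_def by (auto intro!: dvd_sum)

lemma ev_repl:
  assumes "ev ((M::int^'n^'m) *v u)" "ev (u - u')"
  shows "ev (M *v u')"
proof -
  have "M *v u' = M *v u - M *v (u - u')"
    by (simp add: vec_eq_iff matrix_vector_mult_def right_diff_distrib sum_subtractf)
  then show ?thesis using assms ev_mult[OF assms(2), of M] by (simp add: ev_def)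
qed

lemma ev_circ: "ev z \<Longrightarrow> even (int_circ z x)"
  unfolding ev_def int_circ_def by (auto intro!: dvd_sum)

lemma circ_mat: "int_circ w (A *v x) = int_circ (transpose A *v w) x"
proof -
  have "int_circ w (A *v x) = (\<Sum>i\<in>UNIV. \<Sum>j\<in>UNIV. w$i * A$i$j * x$j)"
    unfolding int_circ_def matrix_vector_mult_def by (simp add: sum_distrib_left mult.assoc)
  also have "\<dots> = (\<Sum>j\<in>UNIV. \<Sum>i\<in>UNIV. w$i * A$i$j * x$j)" by (rule sum.swap)
  also have "\<dots> = int_circ (transpose A *v w) x"
    unfolding int_circ_def matrix_vector_mult_def transpose_def
    by (rule sum.cong[OF refl]) (simp add: sum_distrib_right, rule sum.cong, auto simp: mult_ac)
  finally show ?thesis .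
qed

lemma int_similar_trans:
  assumes "int_similar B A1" "int_similar A1 A" shows "int_similar B A"
proof -
  obtain S1 T1 where 1: "S1 ** T1 = mat 1" "T1 ** S1 = mat 1" "A1 = S1 ** B ** T1"
    using assms(1) unfolding int_similar_def by blast
  obtain S2 T2 where 2: "S2 ** T2 = mat 1" "T2 ** S2 = mat 1" "A = S2 ** A1 ** T2"
    using assms(2) unfolding int_similar_def by blast
  have "(S2 ** S1) ** (T1 ** T2) = mat 1"
    by (metis 1(1) 2(1) matrix_mul_assoc matrix_mul_rid)
  moreover have "(T1 ** T2) ** (S2 ** S1) = mat 1"
    by (metis 1(2) 2(2) matrix_mul_assoc matrix_mul_rid)
  moreover have "A = (S2 ** S1) ** B ** (T1 ** T2)"
    using 1(3) 2(3) by (simp add: matrix_mul_assoc)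
  ultimately show ?thesis unfolding int_similar_def by blast
qed

definition tv :: "int^'n \<Rightarrow> int^'n \<Rightarrow> int^'n^'n" where
  "tv a b = (\<chi> i j. (if i = j then 1 else 0) + a$i * b$j)"

lemma tv_apply: "tv a b *v u = u + int_circ b u *s a"
proof -
  have "(\<Sum>j\<in>UNIV. ((if i = j then 1 else 0) + a$i * b$j) * u$j) = u$i + (\<Sum>j\<in>UNIV. b$j * u$j) * a$i" for i
  proof -
    have "(\<Sum>j\<in>UNIV. ((if i = j then 1 else 0) + a$i * b$j) * u$j) = (\<Sum>j\<in>UNIV. (if i = j then u$j else 0)) + (\<Sum>j\<in>UNIV. (b$j * u$j) * a$i)"
      unfolding sum.distrib[symmetric] by (rule sum.cong) (auto simp: algebra_simps)
    also have "\<dots> = u$i + (\<Sum>j\<in>UNIV. b$j * u$j) * a$i" by (simp add: sum_distrib_right)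
    finally show ?thesis .
  qed
  then show ?thesis unfolding tv_def matrix_vector_mult_def int_circ_def by (simp add: vec_eq_iff)
qed

lemma tvT_apply: "transpose (tv a b) *v u = u + int_circ a u *s b"
proof -
  have "(\<Sum>j\<in>UNIV. ((if j = i then 1 else 0) + a$j * b$i) * u$j) = u$i + (\<Sum>j\<in>UNIV. a$j * u$j) * b$i" for i
  proof -
    have "(\<Sum>j\<in>UNIV. ((if j = i then 1 else 0) + a$j * b$i) * u$j) = (\<Sum>j\<in>UNIV. (if j = i then u$j else 0)) + (\<Sum>j\<in>UNIV. (a$j * u$j) * b$i)"
      unfolding sum.distrib[symmetric] by (rule sum.cong) (auto simp: algebra_simps)
    also have "\<dots> = u$i + (\<Sum>j\<in>UNIV. a$j * u$j) * b$i" by (simp add: sum_distrib_right)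
    finally show ?thesis .
  qed
  then show ?thesis unfolding tv_def matrix_vector_mult_def int_circ_def transpose_def by (simp add: vec_eq_iff)
qed

lemma tv_mult: "tv a b ** tv c b = (\<chi> i j. (if i = j then 1 else 0) + (c$i + a$i + a$i * int_circ b c) * b$j)"
proof -
  have "(\<Sum>k\<in>UNIV. ((if i = k then 1 else 0) + a$i * b$k) * ((if k = j then 1 else 0) + c$k * b$j))
     = (if i = j then 1 else 0) + (c$i + a$i + a$i * (\<Sum>k\<in>UNIV. b$k * c$k)) * b$j" for i j
  proof -
    have "(\<Sum>k\<in>UNIV. ((if i = k then 1 else 0) + a$i * b$k) * ((if k = j then 1 else 0) + c$k * b$j))
      = (\<Sum>k\<in>UNIV. (if i = k then (if k = j then 1 else 0) + c$k * b$j else 0))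
        + (\<Sum>k\<in>UNIV. (if k = j then a$i * b$k else 0)) + (\<Sum>k\<in>UNIV. a$i * b$j * (b$k * c$k))"
      unfolding sum.distrib[symmetric] by (rule sum.cong) (auto simp: algebra_simps)
    also have "\<dots> = ((if i = j then 1 else 0) + c$i * b$j) + a$i * b$j + a$i * b$j * (\<Sum>k\<in>UNIV. b$k * c$k)"
      by (simp add: sum_distrib_left)
    finally show ?thesis by (simp add: algebra_simps)
  qed
  then show ?thesis unfolding tv_def matrix_matrix_mult_def int_circ_def by (simp add: vec_eq_iff)
qed

lemma tv_inv: "int_circ b a = 0 \<Longrightarrow> tv a b ** tv (-a) b = mat 1"
  unfolding tv_mult by (simp add: vec_eq_iff mat_def int_circ_def sum_negf)

lemma tv_inv': "int_circ b a = 0 \<Longrightarrow> tv (-a) b ** tv a b = mat 1"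
  using tv_inv[of b "-a"] by (simp add: int_circ_def sum_negf)



lemma conj_mv:
  fixes S T B :: "int^'n^'n"
  assumes "T ** S = mat 1"
  shows "(S ** B ** T) *v (S *v u) = S *v (B *v u)"
proof -
  have "(S ** B ** T) *v (S *v u) = (S ** B ** (T ** S)) *v u"
    by (simp add: matrix_vector_mul_assoc matrix_mul_assoc)
  also have "\<dots> = S *v (B *v u)" using assms by (simp add: matrix_vector_mul_assoc)
  finally show ?thesis .
qed

lemma step:
  fixes B :: "int^'n^'n"
  assumes ba: "int_circ b a = 0" and Bu: "ev (B *v u)" and Bv: "ev (transpose B *v v)"
  shows "\<exists>A. int_similar B A \<and> det A = det B \<and> ev (A *v (u + int_circ b u *s a))
     \<and> ev (transpose A *v (v + int_circ (-a) v *s b))"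
proof -
  define S where "S = tv a b"
  define T where "T = tv (-a) b"
  have ST: "S ** T = mat 1" using tv_inv[OF ba] unfolding S_def T_def .
  have TS: "T ** S = mat 1" using tv_inv'[OF ba] unfolding S_def T_def .
  define A where "A = S ** B ** T"
  have sim: "int_similar B A" unfolding int_similar_def A_def using ST TS by blast
  have dd: "det S * det T = 1" using ST by (metis det_I det_mul)
  have dA: "det A = det B" unfolding A_def det_mul using dd by (simp add: algebra_simps)
  have 1: "A *v (S *v u) = S *v (B *v u)" unfolding A_def by (rule conj_mv[OF TS])
  have tA: "transpose A = transpose T ** transpose B ** transpose S"
    unfolding A_def by (simp add: matrix_transpose_mul matrix_mul_assoc)
  have STt: "transpose S ** transpose T = mat 1" by (metis TS matrix_transpose_mul transpose_mat)
  have 2: "transpose A *v (transpose T *v v) = transpose T *v (transpose B *v v)"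
    unfolding tA by (rule conj_mv[OF STt])
  have "ev (A *v (u + int_circ b u *s a))"
    using 1 ev_mult[OF Bu, of S] unfolding S_def tv_apply by simp
  moreover have "ev (transpose A *v (v + int_circ (-a) v *s b))"
    using 2 ev_mult[OF Bv, of "transpose T"] unfolding T_def tvT_apply by simp
  ultimately show ?thesis using sim dA by blast
qed

lemma circ_axis: "int_circ r (axis k 1) = r$k"
  unfolding int_circ_def axis_def by (simp add: if_distrib cong: if_cong)

lemma circ_diff: "int_circ r (x - y) = int_circ r x - int_circ r y"
  unfolding int_circ_def by (simp add: right_diff_distrib sum_subtractf)

lemma circ_add: "int_circ r (x + y) = int_circ r x + int_circ r y"
  unfolding int_circ_def by (simp add: distrib_left sum.distrib)

lemma char_unique:
  fixes L :: "(int^'n) set"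
  assumes L: "L = {y. even (int_circ r y)}" and w: "\<forall>y\<in>L. even (int_circ w y)" and k: "odd (w$k)"
  shows "L = {y. even (int_circ w y)}"
proof -
  have rk: "odd (r$k)"
  proof
    assume "even (r$k)"
    then have "axis k 1 \<in> L" using L by (simp add: circ_axis)
    then have "even (int_circ w (axis k 1))" using w by blast
    then show False using k by (simp add: circ_axis)
  qed
  have "y \<in> L" if "even (int_circ w y)" for y
  proof (rule ccontr)
    assume "y \<notin> L"
    then have "odd (int_circ r y)" using L by simp
    then have "y - axis k 1 \<in> L" using L rk by (simp add: circ_diff circ_axis)
    then have "even (int_circ w (y - axis k 1))" using w by blast
    then show False using that k by (simp add: circ_diff circ_axis)
  qed
  then show ?thesis using w by blast
qed



lemma circ_axis': "int_circ (axis k 1) r = r$k"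
  unfolding int_circ_def axis_def by (simp add: mult_if_l cong: if_cong)

lemma mv_axis: "(M *v axis p 1)$i = (M::int^'n^'n)$i$p"
  unfolding matrix_vector_mult_def axis_def by (simp add: if_distrib cong: if_cong)

lemma lattice_char:
  fixes A :: "int^'n^'n"
  assumes dA: "\<bar>det A\<bar> = 2" and wp: "w$p = 1" and Aw: "ev (A *v w)"
  shows "\<exists>r. int_lattice A = {y. even (int_circ r y)}"
proof -
  define e :: "int^'n" where "e = axis p 1"
  define a where "a = w - e"
  have ea: "int_circ e a = 0" unfolding e_def a_def circ_axis' using wp by (simp add: axis_def)
  define U where "U = tv a e"
  define V where "V = tv (-a) e"
  have UV: "U ** V = mat 1" using tv_inv[OF ea] unfolding U_def V_def .
  have VU: "V ** U = mat 1" using tv_inv'[OF ea] unfolding U_def V_def .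
  have Ue: "U *v e = w" unfolding U_def tv_apply a_def e_def circ_axis' by (simp add: axis_def)
  define A' where "A' = A ** U"
  have A'e: "A' *v e = A *v w" unfolding A'_def using Ue by (simp add: matrix_vector_mul_assoc[symmetric])
  have evcol: "even (A'$i$p)" for i
    using Aw A'e mv_axis[of A' p i] unfolding ev_def e_def by metis
  define A1 :: "int^'n^'n" where "A1 = (\<chi> i j. if j = p then A'$i$p div 2 else A'$i$j)"
  define D :: "int^'n^'n" where "D = (\<chi> i j. if i = j then (if i = p then 2 else 1) else 0)"
  have Dv: "(D *v z)$i = (if i = p then 2 else 1) * z$i" for z i
    unfolding D_def matrix_vector_mult_def by (simp add: mult_if_l cong: if_cong)
  have A1D: "A1 ** D = A'"
  proof -
    have "(A1 ** D)$i$j = A'$i$j" for i j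
    proof -
      have "(A1 ** D)$i$j = (\<Sum>k\<in>UNIV. if k = j then A1$i$j * (if j = p then 2 else 1) else 0)"
        unfolding matrix_matrix_mult_def D_def by (simp add: mult_if_r cong: if_cong)
      also have "\<dots> = A'$i$j" using evcol[of i] by (simp add: A1_def)
      finally show ?thesis .
    qed
    then show ?thesis by (simp add: vec_eq_iff)
  qed
  have detD: "det D = 2"
  proof -
    have "det D = (\<Prod>i\<in>UNIV. if i = p then 2 else 1)"
      by (subst det_diagonal) (auto simp: D_def)
    then show ?thesis by simp
  qed
  have "det U * det V = 1" using UV by (metis det_I det_mul)
  then have dU: "\<bar>det U\<bar> = 1" using zmult_eq_1_iff by auto
  have "\<bar>det A1\<bar> * 2 = 2"
    using dA dU detD by (metis A'_def A1D abs_mult det_mul mult.right_neutral abs_numeral)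
  then have "\<bar>det A1\<bar> = 1" by simp
  then obtain X where X1: "A1 ** X = mat 1" and X2: "X ** A1 = mat 1" using unimod_inverse by blast
  define r where "r = (\<chi> j. X$p$j)"
  have rc: "int_circ r y = (X *v y)$p" for y
    unfolding r_def int_circ_def matrix_vector_mult_def by simp
  have "int_lattice A = {y. even (int_circ r y)}"
  proof (intro set_eqI iffI)
    fix y assume "y \<in> int_lattice A"
    then obtain x where y: "y = A *v x" unfolding int_lattice_def by blast
    define z where "z = V *v x"
    have "A1 ** (D ** V) = A" by (metis A1D A'_def UV matrix_mul_assoc matrix_mul_rid)
    then have "y = A1 *v (D *v z)"
      unfolding y z_def by (simp add: matrix_vector_mul_assoc)
    then have "X *v y = (X ** A1) *v (D *v z)" by (metis matrix_vector_mul_assoc)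
    then have "X *v y = D *v z" by (simp add: X2)
    then show "y \<in> {y. even (int_circ r y)}" by (simp add: rc Dv)
  next
    fix y assume "y \<in> {y. even (int_circ r y)}"
    then have ev: "even ((X *v y)$p)" by (simp add: rc)
    define z where "z = (\<chi> i. if i = p then (X *v y)$p div 2 else (X *v y)$i)"
    have "D *v z = X *v y" using ev by (simp add: vec_eq_iff Dv z_def)
    then have "y = A1 *v (D *v z)" by (simp add: matrix_vector_mul_assoc X1)
    also have "\<dots> = A *v (U *v z)" by (simp add: matrix_vector_mul_assoc A1D A'_def)
    finally show "y \<in> int_lattice A" unfolding int_lattice_def by blast
  qed
  then show ?thesis by blast
qed



lemma finish:
  fixes A :: "int^'n^'n"
  assumes dA: "\<bar>det A\<bar> = 2" and wp: "w$p = 1" and Aw: "ev (A *v w)" and ATw: "ev (transpose A *v w)"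
  shows "int_lattice A = {y. even (int_circ w y)} \<and> int_lattice (transpose A) = {y. even (int_circ w y)}"
proof
  obtain r where r: "int_lattice A = {y. even (int_circ r y)}" using lattice_char[OF dA wp Aw] by blast
  have "\<forall>y\<in>int_lattice A. even (int_circ w y)"
    unfolding int_lattice_def using ATw by (auto simp: circ_mat ev_circ simp del: transpose_matrix_vector)
  then show "int_lattice A = {y. even (int_circ w y)}" using char_unique[OF r, of w p] wp by simp
next
  have dA': "\<bar>det (transpose A)\<bar> = 2" using dA by simp
  obtain r where r: "int_lattice (transpose A) = {y. even (int_circ r y)}" using lattice_char[OF dA' wp ATw] by blast
  have "\<forall>y\<in>int_lattice (transpose A). even (int_circ w y)"
    unfolding int_lattice_def using Aw by (auto simp: circ_mat ev_circ simp del: transpose_matrix_vector)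
  then show "int_lattice (transpose A) = {y. even (int_circ w y)}" using char_unique[OF r, of w p] wp by simp
qed

lemma img_plus: "x \<in> (\<lambda>y. c + y) ` L \<longleftrightarrow> x - c \<in> (L :: (int^'n) set)"
  by (auto simp: image_iff intro!: bexI[of _ "x - c"])

lemma img_minus: "x \<in> (\<lambda>y. n - y) ` L \<longleftrightarrow> n - x \<in> (L :: (int^'n) set)"
  by (auto simp: image_iff intro!: bexI[of _ "n - x"])

lemma img_plus': "x \<in> (+) c ` L \<longleftrightarrow> x - c \<in> (L :: (int^'n) set)"
  using img_plus[of x c L] by (simp add: fun_eq_iff)
lemma img_minus': "x \<in> (-) c ` L \<longleftrightarrow> c - x \<in> (L :: (int^'n) set)"
  using img_minus[of x c L] by (simp add: fun_eq_iff)

lemma char_props: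
  fixes L :: "(int^'n) set"
  assumes L: "L = {y. even (int_circ q y)}" and l: "odd (int_circ q l)"
  shows "(UNIV = ((\<lambda>y. l + y) ` L) \<union> L \<and>
       ((\<lambda>y. l + y) ` L) \<inter> L = {}) \<and>
    ((\<forall>y\<in>L. even (int_circ q y)) \<and>
       (\<forall>y\<in>(\<lambda>y. l + y) ` L. odd (int_circ q y))) \<and>
    (\<forall>m\<in>L. \<forall>n :: int ^ 'n.
       UNIV = ((\<lambda>y. n - y) ` L) \<union> ((\<lambda>y. l - m - n + y) ` L) \<and>
       ((\<lambda>y. n - y) ` L) \<inter> ((\<lambda>y. l - m - n + y) ` L) = {}) \<and>
    (\<forall>m\<in>(\<lambda>y. l + y) ` L. \<forall>n :: int ^ 'n.
       (\<lambda>y. n - y) ` L = (\<lambda>y. l - m - n + y) ` L)"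
  using l unfolding set_eq_iff
  apply (simp add: img_plus img_minus img_plus' img_minus' L circ_diff circ_add)
  by blast



lemma conclude:
  fixes B A :: "int ^ 'n ^ 'n"
  assumes sim: "int_similar B A" and dA: "\<bar>det A\<bar> = 2" and wp: "w$p = 1"
    and Aw: "ev (A *v w)" and ATw: "ev (transpose A *v w)"
  shows "\<exists>(A :: int ^ 'n ^ 'n) (l :: int ^ 'n) (q :: int ^ 'n).
    int_similar B A \<and>
    int_lattice A = int_lattice (transpose A) \<and>
    (UNIV = ((\<lambda>y. l + y) ` int_lattice A) \<union> int_lattice A \<and>
       ((\<lambda>y. l + y) ` int_lattice A) \<inter> int_lattice A = {}) \<and>
    ((\<forall>y\<in>int_lattice A. even (int_circ q y)) \<and>
       (\<forall>y\<in>(\<lambda>y. l + y) ` int_lattice A. odd (int_circ q y))) \<and>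
    (\<forall>m\<in>int_lattice A. \<forall>n :: int ^ 'n.
       UNIV = ((\<lambda>y. n - y) ` int_lattice A) \<union> ((\<lambda>y. l - m - n + y) ` int_lattice A) \<and>
       ((\<lambda>y. n - y) ` int_lattice A) \<inter> ((\<lambda>y. l - m - n + y) ` int_lattice A) = {}) \<and>
    (\<forall>m\<in>(\<lambda>y. l + y) ` int_lattice A. \<forall>n :: int ^ 'n.
       (\<lambda>y. n - y) ` int_lattice A = (\<lambda>y. l - m - n + y) ` int_lattice A)"
proof -
  have F: "int_lattice A = {y. even (int_circ w y)}" "int_lattice (transpose A) = {y. even (int_circ w y)}"
    using finish[OF dA wp Aw ATw] by auto
  have "odd (int_circ w (axis p 1))" using wp by (simp add: circ_axis)
  from char_props[OF F(1) this] sim F show ?thesis by metis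
qed

lemma ev_axis_iff: "ev (x - axis p 1) \<longleftrightarrow> (\<forall>i. if i = p then odd (x$i) else even (x$i))"
  unfolding ev_def axis_def by auto

theorem theorem4p1:
  fixes B :: "int ^ 'n ^ 'n"
  assumes "\<bar>det B\<bar> = 2"
  shows "\<exists>(A :: int ^ 'n ^ 'n) (l :: int ^ 'n) (q :: int ^ 'n).
    int_similar B A \<and>
    int_lattice A = int_lattice (transpose A) \<and>
    (UNIV = ((\<lambda>y. l + y) ` int_lattice A) \<union> int_lattice A \<and>
       ((\<lambda>y. l + y) ` int_lattice A) \<inter> int_lattice A = {}) \<and>
    ((\<forall>y\<in>int_lattice A. even (int_circ q y)) \<and>
       (\<forall>y\<in>(\<lambda>y. l + y) ` int_lattice A. odd (int_circ q y))) \<and>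
    (\<forall>m\<in>int_lattice A. \<forall>n :: int ^ 'n.
       UNIV = ((\<lambda>y. n - y) ` int_lattice A) \<union> ((\<lambda>y. l - m - n + y) ` int_lattice A) \<and>
       ((\<lambda>y. n - y) ` int_lattice A) \<inter> ((\<lambda>y. l - m - n + y) ` int_lattice A) = {}) \<and>
    (\<forall>m\<in>(\<lambda>y. l + y) ` int_lattice A. \<forall>n :: int ^ 'n.
       (\<lambda>y. n - y) ` int_lattice A = (\<lambda>y. l - m - n + y) ` int_lattice A)"
proof -
  obtain u p where Bu: "ev (B *v u)" and up: "odd (u$p)" using kernel_exists[OF assms] by blast
  define a :: "int^'n" where "a = (\<chi> i. if i = p then 0 else - u$i)"
  have ba: "int_circ (axis p 1) a = 0" unfolding circ_axis' by (simp add: a_def)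
  have B0: "ev (transpose B *v 0)" by (simp add: ev_def)
  obtain A1 where sim1: "int_similar B A1" and d1: "det A1 = det B"
    and A1u: "ev (A1 *v (u + int_circ (axis p 1) u *s a))"
    using step[OF ba Bu B0] by blast
  have "ev ((u + int_circ (axis p 1) u *s a) - axis p 1)"
    unfolding ev_axis_iff circ_axis' using up by (simp add: a_def)
  then have A1e: "ev (A1 *v axis p 1)" using ev_repl[OF A1u] by blast
  have dA1: "\<bar>det (transpose A1)\<bar> = 2" using d1 assms by simp
  obtain v r where A1v: "ev (transpose A1 *v v)" and vr: "odd (v$r)"
    using kernel_exists[OF dA1] by (auto simp del: transpose_matrix_vector)
  show ?thesis
  proof (cases "odd (v$p)")
    case True
    define b :: "int^'n" where "b = (\<chi> i. if i = p then 0 else v$i)"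
    have ab: "int_circ b (axis p 1) = 0" unfolding circ_axis by (simp add: b_def)
    obtain A2 where sim2: "int_similar A1 A2" and d2: "det A2 = det A1"
      and A2u: "ev (A2 *v (axis p 1 + int_circ b (axis p 1) *s axis p 1))"
      and A2v: "ev (transpose A2 *v (v + int_circ (- axis p 1) v *s b))"
      using step[OF ab A1e] A1v by (auto simp del: transpose_matrix_vector)
    have A2e: "ev (A2 *v axis p 1)" using A2u ab by simp
    have "ev ((v + int_circ (- axis p 1) v *s b) - axis p 1)"
      unfolding ev_axis_iff using True
      by (simp add: b_def int_circ_def axis_def sum_negf mult_if_l cong: if_cong)
    then have A2v': "ev (transpose A2 *v axis p 1)" using ev_repl[OF A2v] by blast
    show ?thesis
      by (rule conclude[OF int_similar_trans[OF sim1 sim2] _ _ A2e A2v'])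
         (use d1 d2 assms in \<open>auto simp: axis_def\<close>)
  next
    case False
    with vr have rp: "r \<noteq> p" by auto
    define b :: "int^'n" where "b = (\<chi> i. if i = r then 0 else v$i)"
    have ab: "int_circ b (axis r 1) = 0" unfolding circ_axis by (simp add: b_def)
    obtain A2 where sim2: "int_similar A1 A2" and d2: "det A2 = det A1"
      and A2u: "ev (A2 *v (axis p 1 + int_circ b (axis p 1) *s axis r 1))"
      and A2v: "ev (transpose A2 *v (v + int_circ (- axis r 1) v *s b))"
      using step[OF ab A1e] A1v by (auto simp del: transpose_matrix_vector)
    have "ev ((axis p 1 + int_circ b (axis p 1) *s axis r 1) - axis p 1)"
      unfolding ev_axis_iff circ_axis using False rp by (simp add: b_def axis_def)
    then have A2e: "ev (A2 *v axis p 1)" using ev_repl[OF A2u] by blast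
    have "ev ((v + int_circ (- axis r 1) v *s b) - axis r 1)"
      unfolding ev_axis_iff using vr
      by (simp add: b_def int_circ_def axis_def sum_negf mult_if_l cong: if_cong)
    then have A2r: "ev (transpose A2 *v axis r 1)" using ev_repl[OF A2v] by blast
    have pr: "int_circ (axis p 1) (axis r 1) = 0" unfolding circ_axis using rp by (simp add: axis_def)
    obtain A3 where sim3: "int_similar A2 A3" and d3: "det A3 = det A2"
      and A3u: "ev (A3 *v (axis p 1 + int_circ (axis p 1) (axis p 1) *s axis r 1))"
      and A3v: "ev (transpose A3 *v (axis r 1 + int_circ (- axis r 1) (axis r 1) *s axis p 1))"
      using step[OF pr A2e A2r] by blast
    have A3u': "ev (A3 *v (axis p 1 + axis r 1))" using A3u unfolding circ_axis by (simp add: axis_def)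
    have "ev ((axis r 1 + int_circ (- axis r 1) (axis r 1) *s axis p 1) - (axis p 1 + axis r 1))"
      unfolding ev_def by (simp add: int_circ_def axis_def sum_negf mult_if_l cong: if_cong)
    then have A3v': "ev (transpose A3 *v (axis p 1 + axis r 1))" using ev_repl[OF A3v] by blast
    have wp: "(axis p 1 + axis r 1 :: int^'n)$p = 1" using rp by (simp add: axis_def)
    show ?thesis
      by (rule conclude[OF int_similar_trans[OF int_similar_trans[OF sim1 sim2] sim3] _ wp A3u' A3v'])
         (use d1 d2 d3 assms in auto)
  qed
qed

end
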